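(* Let $(W_t)_{t\ge 0}$ be a standard Wiener process. Then almost surely $\|W_\cdot\|_{\widetilde A}<\infty$, where for $f\in C([0,1])$ $$\|f\|_{\widetilde A}:=\sup_{j\in\mathbb{N}_0}\ \sup_{0\le k\le j}\ \sup_{0<t<1}\ \frac{(\widetilde A_kf_j)^*(t)}{\sqrt{2^{k-j}\log(1/t)+1}}$$ and the path $W_\cdot$ is considered as the function $t\mapsto W_t$ on $[0,1]$.
   Context: Let $I=[0,1]$. For $j\in\mathbb{N}_0$ and $m\in\{0,\dots,2^j-1\}$ let $I_{j,m}=[m2^{-j},(m+1)2^{-j}]$ and let $\chi_{j,m}$ be its indicator function. For $f\in C(I)$ define $$\lambda_{j,m}(f)=-2^{j/2-1}\Big(f\big((m+1)2^{-j}\big)-2f\big((2m+1)2^{-j-1}\big)+f\big(m2^{-j}\big)\Big)$$ (the coefficients of $f$ in the expansion $f(x)=f(0)(1-x)+f(1)x+\sum_{j,m}2^{-j/2}\lambda_{j,m}v_{j,m}(x)$ in the Faber system of hat functions $v_{j,m}$ supported on $I_{j,m}$ with height $1$), and put $f_j=\sum_{m=0}^{2^j-1}\lambda_{j,m}(f)\chi_{j,m}$. For integrable $g$ on $I$ and $k\in\mathbb{N}_0$, $(A_kg)(x)=\sum_{l=0}^{2^k-1}2^k\int_{I_{k,l}}g(t)\,dt\cdot\chi_{k,l}(x)$ and $\widetilde A_kg=A_k(|g|)$. For measurable $h$ on $I$, $h^*(t)=\inf\{s\ge0:|\{x\in I:|h(x)|>s\}|\le t\}$ is the non-increasing rearrangement.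 *)

theory Defs
  imports "HOL-Probability.Probability"
begin

definition wiener_process :: "'a measure \<Rightarrow> (real \<Rightarrow> 'a \<Rightarrow> real) \<Rightarrow> bool" where
  "wiener_process M W \<longleftrightarrow>
     prob_space M \<and>
     (\<forall>t\<ge>0. W t \<in> borel_measurable M) \<and>
     (AE \<omega> in M. W 0 \<omega> = 0) \<and>
     (AE \<omega> in M. continuous_on {0..} (\<lambda>t. W t \<omega>)) \<and>
     (\<forall>s t. 0 \<le> s \<and> s < t \<longrightarrow>
        distributed M lborel (\<lambda>\<omega>. W t \<omega> - W s \<omega>) (normal_density 0 (sqrt (t - s)))) \<and>
     (\<forall>(n::nat) (ts::nat \<Rightarrow> real). 0 \<le> ts 0 \<and> (\<forall>i<n. ts i < ts (Suc i)) \<longrightarrow>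
        prob_space.indep_vars M (\<lambda>_. borel) (\<lambda>i \<omega>. W (ts (Suc i)) \<omega> - W (ts i) \<omega>) {..<n})"

definition dyad_int :: "nat \<Rightarrow> nat \<Rightarrow> real set" where
  "dyad_int j m = {real m / 2 ^ j .. (real m + 1) / 2 ^ j}"

definition dyad_chi :: "nat \<Rightarrow> nat \<Rightarrow> real \<Rightarrow> real" where
  "dyad_chi j m = indicator (dyad_int j m)"

definition faber_coeff :: "nat \<Rightarrow> nat \<Rightarrow> (real \<Rightarrow> real) \<Rightarrow> real" where
  "faber_coeff j m f =
     - (2 powr (real j / 2 - 1)) *
       (f ((real m + 1) / 2 ^ j) - 2 * f ((2 * real m + 1) / 2 ^ (j + 1)) + f (real m / 2 ^ j))"

definition faber_level :: "(real \<Rightarrow> real) \<Rightarrow> nat \<Rightarrow> real \<Rightarrow> real" where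
  "faber_level f j x = (\<Sum>m<2 ^ j. faber_coeff j m f * dyad_chi j m x)"

definition avg_op :: "nat \<Rightarrow> (real \<Rightarrow> real) \<Rightarrow> real \<Rightarrow> real" where
  "avg_op k g x = (\<Sum>l<2 ^ k. 2 ^ k * integral (dyad_int k l) g * dyad_chi k l x)"

definition avg_op_abs :: "nat \<Rightarrow> (real \<Rightarrow> real) \<Rightarrow> real \<Rightarrow> real" where
  "avg_op_abs k g = avg_op k (\<lambda>t. \<bar>g t\<bar>)"

definition rearr :: "(real \<Rightarrow> real) \<Rightarrow> real \<Rightarrow> real" where
  "rearr h t = Inf {s. 0 \<le> s \<and> measure lebesgue {x \<in> {0..1}. \<bar>h x\<bar> > s} \<le> t}"

definition tA_norm :: "(real \<Rightarrow> real) \<Rightarrow> ereal" where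
  "tA_norm f = (SUP j::nat. SUP k\<in>{..j}. SUP t\<in>{0<..<1::real}.
      ereal (rearr (avg_op_abs k (faber_level f j)) t /
             sqrt (2 powr (real k - real j) * ln (1 / t) + 1)))"

end

theory Submission
  imports Defs
begin

lemma pow2_split: "k \<le> j \<Longrightarrow> (2::real)^j = 2^k * 2^(j-k)"
  by (simp add: power_add[symmetric])

lemma dyad_int_scale:
  assumes "k \<le> j"
  shows "dyad_int k l = {real (l * 2^(j-k)) / 2^j .. real ((l+1) * 2^(j-k)) / 2^j}"
  using pow2_split[OF assms] by (simp add: dyad_int_def field_simps)

lemma content_Int_disj:
  fixes a b u v :: real
  assumes "b \<le> u \<or> v \<le> a"
  shows "measure lborel ({a..b} \<inter> {u..v}) = 0"
  using assms by (auto simp: max_def min_def)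

lemma integral_one_Int:
  fixes a b u v :: real
  shows "integral ({a..b} \<inter> {u..v}) (\<lambda>x. 1::real) = measure lborel ({a..b} \<inter> {u..v})"
  by (simp add: Int_atLeastAtMost)

lemma integral_dyad_chi:
  assumes "k \<le> j"
  shows "integral (dyad_int k l) (dyad_chi j m) =
    (if l * 2^(j-k) \<le> m \<and> m < (l+1) * 2^(j-k) then 1 / 2^j else 0)"
proof -
  define c :: real where "c = 2^j"
  have c: "c > 0" by (simp add: c_def)
  have "integral (dyad_int k l) (dyad_chi j m) =
        integral (dyad_int j m \<inter> dyad_int k l) (\<lambda>x. 1::real)"
  proof -
    have "dyad_chi j m = (\<lambda>x. if x \<in> dyad_int j m then 1 else 0)"
      by (auto simp: dyad_chi_def indicator_def fun_eq_iff)
    then show ?thesis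
      using Henstock_Kurzweil_Integration.integral_restrict_Int[of "dyad_int k l" "dyad_int j m" "\<lambda>x. 1::real"]
      by simp
  qed
  also have "dyad_int j m \<inter> dyad_int k l =
     {real m / c .. real (m+1) / c} \<inter> {real (l * 2^(j-k)) / c .. real ((l+1) * 2^(j-k)) / c}"
    unfolding dyad_int_scale[OF assms] by (simp add: dyad_int_def c_def add.commute)
  also have "integral \<dots> (\<lambda>x. 1::real) = (if l * 2^(j-k) \<le> m \<and> m < (l+1) * 2^(j-k) then 1 / c else 0)"
  proof (cases "l * 2^(j-k) \<le> m \<and> m < (l+1) * 2^(j-k)")
    case True
    then have a: "l * 2^(j-k) \<le> m" "m+1 \<le> (l+1)*2^(j-k)" by auto
    have "real (l * 2^(j-k)) / c \<le> real m / c" "real (m+1) / c \<le> real ((l+1) * 2^(j-k)) / c"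
      using c a by (meson divide_right_mono of_nat_le_iff less_imp_le)+
    then have "{real m / c .. real (m+1) / c} \<inter> {real (l * 2^(j-k)) / c .. real ((l+1) * 2^(j-k)) / c}
       = {real m / c .. real (m+1) / c}" by auto
    moreover have "real m / c \<le> real (m+1) / c" using c by (simp add: divide_right_mono)
    ultimately show ?thesis using True c by (simp add: integral_one_Int diff_divide_distrib[symmetric])
  next
    case False
    then have a: "m+1 \<le> l * 2^(j-k) \<or> (l+1)*2^(j-k) \<le> m" by auto
    have "real (m+1) / c \<le> real (l * 2^(j-k)) / c \<or> real ((l+1) * 2^(j-k)) / c \<le> real m / c"
      using c a by (meson divide_right_mono of_nat_le_iff less_imp_le)
    then show ?thesis using False by (simp only: integral_one_Int content_Int_disj if_False)
  qed
  finally show ?thesis by (simp add: c_def)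
qed

lemma dyad_chi_if: "dyad_chi j m = (\<lambda>x. if x \<in> dyad_int j m then 1 else 0)"
  by (auto simp: dyad_chi_def indicator_def fun_eq_iff)

lemma dyad_chi_nonneg: "0 \<le> dyad_chi j m x"
  by (simp add: dyad_chi_def)

lemma integrable_dyad_chi: "dyad_chi j m integrable_on dyad_int k l"
proof -
  have "(\<lambda>x. 1::real) integrable_on (dyad_int j m \<inter> dyad_int k l)"
    unfolding dyad_int_def Int_atLeastAtMost by (rule integrable_const_ivl)
  then show ?thesis unfolding dyad_chi_if
    using Henstock_Kurzweil_Integration.integrable_restrict_Int[of "dyad_int j m" "\<lambda>x. 1::real" "dyad_int k l"] by simp
qed

lemma integrable_cmul_real: "f integrable_on S \<Longrightarrow> (\<lambda>x. (c::real) * f x) integrable_on S"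
  using integrable_cmul[of f S c] by simp

lemma nat_block_le:
  assumes "k \<le> j" "l < 2^k"
  shows "(l+1) * 2^(j-k) \<le> (2::nat)^j"
proof -
  have "(l+1) * 2^(j-k) \<le> 2^k * 2^(j-k)" using assms by (intro mult_le_mono1) simp
  also have "\<dots> = (2::nat)^j" using assms by (simp add: power_add[symmetric])
  finally show ?thesis .
qed

lemma avg_coeff_bound:
  assumes "k \<le> j" "l < 2^k"
  shows "2^k * integral (dyad_int k l) (\<lambda>t. \<bar>faber_level f j t\<bar>)
     \<le> (\<Sum>m\<in>{l*2^(j-k)..<(l+1)*2^(j-k)}. \<bar>faber_coeff j m f\<bar>) / 2^(j-k)"
proof -
  define g where "g x = (\<Sum>m<2^j. \<bar>faber_coeff j m f\<bar> * dyad_chi j m x)" for x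
  have pt: "\<bar>faber_level f j x\<bar> \<le> g x" for x
  proof -
    have "\<bar>faber_level f j x\<bar> \<le> (\<Sum>m<2^j. \<bar>faber_coeff j m f * dyad_chi j m x\<bar>)"
      unfolding faber_level_def by (rule sum_abs)
    also have "\<dots> = g x" unfolding g_def
      by (intro sum.cong refl) (simp add: abs_mult dyad_chi_nonneg)
    finally show ?thesis .
  qed
  have gi: "g integrable_on dyad_int k l"
    unfolding g_def by (intro integrable_sum finite_lessThan integrable_cmul_real integrable_dyad_chi)
  have "integral (dyad_int k l) g = (\<Sum>m<2^j. \<bar>faber_coeff j m f\<bar> * integral (dyad_int k l) (dyad_chi j m))"
    unfolding g_def
    by (subst integral_sum) (auto intro!: integrable_cmul_real integrable_dyad_chi)
  also have "\<dots> = (\<Sum>m<2^j. if m \<in> {l*2^(j-k)..<(l+1)*2^(j-k)} then \<bar>faber_coeff j m f\<bar> / 2^j else 0)"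
    by (intro sum.cong refl) (simp add: integral_dyad_chi[OF assms(1)])
  also have "\<dots> = (\<Sum>m\<in>{m\<in>{..<2^j}. m \<in> {l*2^(j-k)..<(l+1)*2^(j-k)}}. \<bar>faber_coeff j m f\<bar> / 2^j)"
    by (rule sum.inter_filter[symmetric]) simp
  also have "{m\<in>{..<2^j}. m \<in> {l*2^(j-k)..<(l+1)*2^(j-k)}} = {l*2^(j-k)..<(l+1)*2^(j-k)}"
    using nat_block_le[OF assms] by auto
  also have "(\<Sum>m\<in>{l*2^(j-k)..<(l+1)*2^(j-k)}. \<bar>faber_coeff j m f\<bar> / 2^j)
     = (\<Sum>m\<in>{l*2^(j-k)..<(l+1)*2^(j-k)}. \<bar>faber_coeff j m f\<bar>) / 2^j"
    by (simp add: sum_divide_distrib)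
  finally have ig: "integral (dyad_int k l) g = (\<Sum>m\<in>{l*2^(j-k)..<(l+1)*2^(j-k)}. \<bar>faber_coeff j m f\<bar>) / 2^j" .
  have "integral (dyad_int k l) (\<lambda>t. \<bar>faber_level f j t\<bar>) \<le> integral (dyad_int k l) g"
  proof (cases "(\<lambda>t. \<bar>faber_level f j t\<bar>) integrable_on dyad_int k l")
    case True
    then show ?thesis using gi pt by (intro integral_le) auto
  next
    case False
    then have "integral (dyad_int k l) (\<lambda>t. \<bar>faber_level f j t\<bar>) = 0" by (rule not_integrable_integral)
    moreover have "0 \<le> integral (dyad_int k l) g" using gi pt
      by (intro integral_nonneg) (auto intro: order_trans[OF abs_ge_zero])
    ultimately show ?thesis by simp
  qed
  then have "2^k * integral (dyad_int k l) (\<lambda>t. \<bar>faber_level f j t\<bar>) \<le> 2^k * integral (dyad_int k l) g"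
    by simp
  also have "\<dots> = (\<Sum>m\<in>{l*2^(j-k)..<(l+1)*2^(j-k)}. \<bar>faber_coeff j m f\<bar>) / 2^(j-k)"
    unfolding ig using pow2_split[OF assms(1)] by (simp add: field_simps)
  finally show ?thesis .
qed

lemma finite_null_lebesgue: "finite (P::real set) \<Longrightarrow> P \<in> null_sets lebesgue"
  by (simp add: finite_imp_null_set_lborel null_sets_completionI)

lemma dyad_unique:
  assumes "x \<in> dyad_int k l" "x \<in> dyad_int k l'" "l < l'"
  shows "x = real l' / 2^k"
proof -
  have "real l + 1 \<le> real l'" using assms(3) by simp
  then have "(real l + 1) / 2^k \<le> real l' / 2^k" by (simp add: divide_right_mono)
  then show ?thesis using assms(1,2) by (auto simp: dyad_int_def)
qed

lemma rearr_le:
  fixes c :: "nat \<Rightarrow> real"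
  assumes h: "\<And>x. h x = (\<Sum>l<2^k. c l * dyad_chi k l x)"
    and s: "0 \<le> s" and cnt: "real (card {l\<in>{..<2^k}. s < \<bar>c l\<bar>}) \<le> 2^k * t"
  shows "rearr h t \<le> s"
proof -
  define G where "G = {l\<in>{..<2^k}. s < \<bar>c l\<bar>}"
  define P where "P = (\<lambda>i. real i / 2^k) ` {..(2::nat)^k}"
  define A where "A = {x\<in>{0..1}. \<bar>h x\<bar> > s}"
  define B where "B = (\<Union>l\<in>G. dyad_int k l) \<union> P"
  have finG: "finite G" by (simp add: G_def)
  have finP: "finite P" by (simp add: P_def)
  have t0: "0 \<le> t"
  proof -
    have "0 \<le> 2^k * t" using cnt by (meson of_nat_0_le_iff order_trans)
    moreover have "(0::real) < 2^k" by simp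
    ultimately show ?thesis by (metis zero_le_mult_iff not_le)
  qed
  have AB: "A \<subseteq> B"
  proof
    fix x assume xA: "x \<in> A"
    show "x \<in> B"
    proof (cases "x \<in> P")
      case True then show ?thesis by (simp add: B_def)
    next
      case False
      define S where "S = {l\<in>{..<2^k}. x \<in> dyad_int k l}"
      have uniq: "l = l'" if "l \<in> S" "l' \<in> S" for l l'
      proof (rule ccontr)
        assume ne: "l \<noteq> l'"
        have "x = real (max l l') / 2^k"
        proof (cases "l < l'")
          case True then show ?thesis using that dyad_unique[of x k l l'] by (auto simp: S_def max_def)
        next
          case False then have "l' < l" using ne by simp
          then show ?thesis using that dyad_unique[of x k l' l] by (auto simp: S_def max_def)
        qed
        moreover have "max l l' \<in> {..(2::nat)^k}" using that by (auto simp: S_def max_def)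
        ultimately have "x \<in> P" unfolding P_def by blast
        then show False using False by simp
      qed
      have hx: "h x = (\<Sum>l\<in>S. c l)"
      proof -
        have "h x = (\<Sum>l<2^k. if x \<in> dyad_int k l then c l else 0)"
          unfolding h by (intro sum.cong refl) (simp add: dyad_chi_if)
        also have "\<dots> = (\<Sum>l\<in>S. c l)"
          unfolding S_def by (rule sum.inter_filter[symmetric]) simp
        finally show ?thesis .
      qed
      show ?thesis
      proof (cases "S = {}")
        case True
        then have "h x = 0" using hx by simp
        then show ?thesis using xA s by (simp add: A_def)
      next
        case False
        then obtain l0 where l0: "l0 \<in> S" by blast
        then have "S = {l0}" using uniq by blast
        then have "h x = c l0" using hx by simp
        then have "l0 \<in> G" using xA l0 by (auto simp: A_def G_def S_def)
        then show ?thesis using l0 by (auto simp: B_def S_def)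
      qed
    qed
  qed
  have mA: "measure lebesgue A \<le> t"
  proof (cases "A \<in> sets lebesgue")
    case False
    then show ?thesis using t0 by (simp add: measure_notin_sets)
  next
    case True
    have B1: "(\<Union>l\<in>G. dyad_int k l) \<in> fmeasurable lebesgue"
      using finG by (intro fmeasurable.finite_UN) (auto simp: dyad_int_def)
    have B2: "P \<in> fmeasurable lebesgue"
      by (rule fmeasurableI_null_sets[OF finite_null_lebesgue[OF finP]])
    have Bf: "B \<in> fmeasurable lebesgue"
      unfolding B_def using B1 B2 by (rule fmeasurable.Un)
    have "measure lebesgue A \<le> measure lebesgue B"
      by (rule measure_mono_fmeasurable[OF AB True Bf])
    also have "\<dots> \<le> measure lebesgue (\<Union>l\<in>G. dyad_int k l) + measure lebesgue P"
      unfolding B_def using finG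
      by (intro measure_Un_le sets.finite_UN) (auto simp: dyad_int_def intro: null_setsD2[OF finite_null_lebesgue[OF finP]])
    also have "measure lebesgue P = 0"
      using finite_null_lebesgue[OF finP] by (simp add: measure_eq_0_null_sets)
    also have "measure lebesgue (\<Union>l\<in>G. dyad_int k l) \<le> (\<Sum>l\<in>G. measure lebesgue (dyad_int k l))"
      using finG by (intro measure_UNION_le) (auto simp: dyad_int_def)
    also have "\<dots> = (\<Sum>l\<in>G. 1 / 2^k)"
      by (intro sum.cong refl) (simp add: dyad_int_def divide_right_mono diff_divide_distrib[symmetric])
    also have "\<dots> = real (card G) / 2^k" by simp
    also have "\<dots> \<le> t" using cnt unfolding G_def[symmetric] by (simp add: field_simps)
    finally show ?thesis by simp
  qed
  have "s \<in> {s. 0 \<le> s \<and> measure lebesgue {x \<in> {0..1}. \<bar>h x\<bar> > s} \<le> t}"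
    using s mA by (simp add: A_def)
  moreover have "bdd_below {s. 0 \<le> s \<and> measure lebesgue {x \<in> {0..1}. \<bar>h x\<bar> > s} \<le> t}"
    by (rule bdd_belowI[of _ 0]) simp
  ultimately show ?thesis unfolding rearr_def by (rule cInf_lower)
qed

definition Zp :: "(real \<Rightarrow> real) \<Rightarrow> nat \<Rightarrow> nat \<Rightarrow> real" where
  "Zp f j i = 2^(j+1) * (f (real (Suc i) / 2^(j+1)) - f (real i / 2^(j+1)))^2"

definition Tp :: "(real \<Rightarrow> real) \<Rightarrow> nat \<Rightarrow> nat \<Rightarrow> nat \<Rightarrow> real" where
  "Tp f j k l = (\<Sum>i\<in>{2*(l*2^(j-k))..<2*((l+1)*2^(j-k))}. Zp f j i)"

lemma powr_sq: "(2 powr (real j / 2 - 1))^2 = (2::real)^(j+1) / 8"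
proof -
  have ex: "real j / 2 - 1 + (real j / 2 - 1) = real (j+1) - 3" by simp
  have "(2 powr (real j / 2 - 1))^2 = 2 powr (real j / 2 - 1) * 2 powr (real j / 2 - 1)"
    by (simp add: power2_eq_square)
  also have "\<dots> = 2 powr (real (j+1) - 3)" by (simp only: powr_add[symmetric] ex)
  also have "\<dots> = 2 powr real (j+1) / 2 powr 3" by (rule powr_diff)
  also have "\<dots> = (2::real)^(j+1) / 8"
  proof -
    have a: "2 powr real (j+1) = (2::real)^(j+1)" by (rule powr_realpow) simp
    have b: "2 powr (3::real) = 8" using powr_realpow[of 2 3] by simp
    show ?thesis unfolding a b ..
  qed
  finally show ?thesis .
qed

lemma coeff_sq_bound:
  "(faber_coeff j m f)^2 \<le> (Zp f j (2*m) + Zp f j (2*m+1)) / 4"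
proof -
  define u where "u = f (real (2*m) / 2^(j+1))"
  define v where "v = f (real (Suc (2*m)) / 2^(j+1))"
  define w where "w = f (real (Suc (2*m+1)) / 2^(j+1))"
  have e1: "(real m + 1) / 2^j = real (Suc (2*m+1)) / (2::real)^(j+1)" by (simp add: field_simps)
  have e2: "(2 * real m + 1) / 2^(j+1) = real (Suc (2*m)) / (2::real)^(j+1)" by simp
  have e3: "real m / 2^j = real (2*m) / (2::real)^(j+1)" by (simp add: field_simps)
  have fc: "faber_coeff j m f = - (2 powr (real j / 2 - 1)) * (w - 2 * v + u)"
    unfolding faber_coeff_def e1 e2 e3 u_def v_def w_def ..
  have Z1: "Zp f j (2*m) = 2^(j+1) * (v - u)^2" by (simp add: Zp_def u_def v_def)
  have Z2: "Zp f j (2*m+1) = 2^(j+1) * (w - v)^2" by (simp add: Zp_def v_def w_def)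
  have "(faber_coeff j m f)^2 = (2 powr (real j / 2 - 1))^2 * (w - 2 * v + u)^2"
    unfolding fc by (simp add: power_mult_distrib)
  also have "\<dots> = 2^(j+1) / 8 * ((w - v) - (v - u))^2" unfolding powr_sq by (simp add: algebra_simps)
  also have "\<dots> \<le> 2^(j+1) / 8 * (2 * ((w - v)^2 + (v - u)^2))"
  proof (rule mult_left_mono)
    show "((w - v) - (v - u))^2 \<le> 2 * ((w - v)^2 + (v - u)^2)"
      using sum_squares_ge_zero[of "(w-v) + (v-u)" 0] by (simp add: power2_eq_square algebra_simps)
  qed simp
  also have "\<dots> = (Zp f j (2*m) + Zp f j (2*m+1)) / 4" unfolding Z1 Z2 by (simp add: algebra_simps)
  finally show ?thesis .
qed

lemma sum_pairs:
  "p \<le> (q::nat) \<Longrightarrow> (\<Sum>m\<in>{p..<q}. g (2*m) + g (2*m+1)) = (\<Sum>i\<in>{2*p..<2*q}. (g i::real))"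
proof (induction q)
  case 0 then show ?case by simp
next
  case (Suc q)
  show ?case
  proof (cases "p = Suc q")
    case True then show ?thesis by simp
  next
    case False
    then have pq: "p \<le> q" using Suc.prems by simp
    have "(\<Sum>m\<in>{p..<Suc q}. g (2*m) + g (2*m+1)) = (\<Sum>m\<in>{p..<q}. g (2*m) + g (2*m+1)) + (g (2*q) + g (2*q+1))"
      using pq by simp
    also have "\<dots> = (\<Sum>i\<in>{2*p..<2*q}. g i) + (g (2*q) + g (2*q+1))" using Suc.IH[OF pq] by simp
    also have "\<dots> = (\<Sum>i\<in>{2*p..<2*Suc q}. g i)"
      using pq by (simp add: sum.atLeastLessThan_Suc add.assoc)
    finally show ?thesis .
  qed
qed

lemma block_sq_bound:
  "(\<Sum>m\<in>{l*2^(j-k)..<(l+1)*2^(j-k)}. (faber_coeff j m f)^2) \<le> Tp f j k l / 4"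
proof -
  have "(\<Sum>m\<in>{l*2^(j-k)..<(l+1)*2^(j-k)}. (faber_coeff j m f)^2)
     \<le> (\<Sum>m\<in>{l*2^(j-k)..<(l+1)*2^(j-k)}. (Zp f j (2*m) + Zp f j (2*m+1)) / 4)"
    by (intro sum_mono coeff_sq_bound)
  also have "\<dots> = (\<Sum>m\<in>{l*2^(j-k)..<(l+1)*2^(j-k)}. Zp f j (2*m) + Zp f j (2*m+1)) / 4"
    by (simp add: sum_divide_distrib)
  also have "\<dots> = Tp f j k l / 4"
    unfolding Tp_def by (subst sum_pairs) auto
  finally show ?thesis .
qed

lemma amgm_sum:
  fixes a :: "nat \<Rightarrow> real"
  assumes e: "0 < e" and B: "finite B" "card B = n" "0 < n"
  shows "(\<Sum>m\<in>B. a m) / n \<le> e / 2 + (\<Sum>m\<in>B. (a m)^2) / (2 * e * n)"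
proof -
  have pt: "a m \<le> e / 2 + (a m)^2 / (2 * e)" for m
  proof -
    have "0 \<le> (a m - e)^2" by simp
    then have "2 * e * a m \<le> e^2 + (a m)^2" by (simp add: power2_eq_square algebra_simps)
    then show ?thesis using e by (simp add: field_simps power2_eq_square)
  qed
  have "(\<Sum>m\<in>B. a m) \<le> (\<Sum>m\<in>B. e / 2 + (a m)^2 / (2 * e))" by (intro sum_mono pt)
  also have "\<dots> = n * (e/2) + (\<Sum>m\<in>B. (a m)^2) / (2 * e)"
    using B by (simp add: sum.distrib sum_divide_distrib)
  finally have "(\<Sum>m\<in>B. a m) \<le> n * (e/2) + (\<Sum>m\<in>B. (a m)^2) / (2 * e)" .
  then show ?thesis using B e by (simp add: field_simps)
qed

lemma div_le_self_real: "0 \<le> (x::real) \<Longrightarrow> 1 \<le> b \<Longrightarrow> x / b \<le> x"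
  using mult_left_mono[of 1 b x] by (simp add: divide_le_eq)

lemma c_nonneg: "0 \<le> (2::real)^k * integral (dyad_int k l) (\<lambda>t. \<bar>g t\<bar>)"
proof (cases "(\<lambda>t. \<bar>g t\<bar>) integrable_on dyad_int k l")
  case True
  then show ?thesis by (simp add: integral_nonneg)
next
  case False
  then show ?thesis by (simp add: not_integrable_integral)
qed

lemma avg_op_abs_eq:
  "avg_op_abs k g x = (\<Sum>l<2^k. (2^k * integral (dyad_int k l) (\<lambda>t. \<bar>g t\<bar>)) * dyad_chi k l x)"
  by (simp add: avg_op_abs_def avg_op_def)


lemma c_block_bound:
  assumes kj: "k \<le> j" and l: "l < 2^k" and e: "0 < e"
  shows "2^k * integral (dyad_int k l) (\<lambda>x. \<bar>faber_level f j x\<bar>) \<le> e / 2 + Tp f j k l / (8 * e * 2^(j-k))"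
proof -
  define B where "B = {l*2^(j-k)..<(l+1)*2^(j-k)}"
  have "2^k * integral (dyad_int k l) (\<lambda>x. \<bar>faber_level f j x\<bar>)
      \<le> (\<Sum>m\<in>B. \<bar>faber_coeff j m f\<bar>) / 2^(j-k)"
    unfolding B_def by (rule avg_coeff_bound[OF kj l])
  also have "\<dots> = (\<Sum>m\<in>B. \<bar>faber_coeff j m f\<bar>) / real (2^(j-k)::nat)" by simp
  also have "\<dots> \<le> e / 2 + (\<Sum>m\<in>B. \<bar>faber_coeff j m f\<bar>^2) / (2 * e * real (2^(j-k)::nat))"
    by (rule amgm_sum[OF e]) (auto simp: B_def)
  also have "(\<Sum>m\<in>B. \<bar>faber_coeff j m f\<bar>^2) = (\<Sum>m\<in>B. (faber_coeff j m f)^2)" by simp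
  also have "(\<Sum>m\<in>B. (faber_coeff j m f)^2) / (2 * e * real (2^(j-k)::nat))
      \<le> (Tp f j k l / 4) / (2 * e * real (2^(j-k)::nat))"
    unfolding B_def using e by (intro divide_right_mono block_sq_bound) simp
  also have "(Tp f j k l / 4) / (2 * e * real (2^(j-k)::nat)) = Tp f j k l / (8 * e * 2^(j-k))"
    by simp
  finally show ?thesis by simp
qed

lemma c_block_bound2:
  assumes kj: "k \<le> j" and l: "l < 2^k"
  shows "2^k * integral (dyad_int k l) (\<lambda>x. \<bar>faber_level f j x\<bar>) \<le> (\<Sum>m<2^j. \<bar>faber_coeff j m f\<bar>)"
proof -
  have "2^k * integral (dyad_int k l) (\<lambda>x. \<bar>faber_level f j x\<bar>)
      \<le> (\<Sum>m\<in>{l*2^(j-k)..<(l+1)*2^(j-k)}. \<bar>faber_coeff j m f\<bar>) / 2^(j-k)"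
    by (rule avg_coeff_bound[OF kj l])
  also have "\<dots> \<le> (\<Sum>m\<in>{l*2^(j-k)..<(l+1)*2^(j-k)}. \<bar>faber_coeff j m f\<bar>)"
    by (rule div_le_self_real) (auto intro: sum_nonneg)
  also have "\<dots> \<le> (\<Sum>m<2^j. \<bar>faber_coeff j m f\<bar>)"
    using nat_block_le[OF kj l] by (intro sum_mono2) auto
  finally show ?thesis .
qed

lemma den_eq:
  assumes "k \<le> j"
  shows "2 powr (real k - real j) = 1 / (2::real)^(j-k)"
proof -
  have a: "real k - real j = - real (j-k)" using assms by (simp add: of_nat_diff)
  have b: "2 powr real (j-k) = (2::real)^(j-k)" by (rule powr_realpow) simp
  have "2 powr (real k - real j) = 1 / 2 powr real (j-k)" unfolding a by (rule powr_minus_divide)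
  then show ?thesis unfolding b .
qed

lemma good_bound:
  assumes kj: "k \<le> j"
    and good: "\<And>n. real (card {l\<in>{..<2^k}. 12 * (real n + 1 + 2^(j-k)) < Tp f j k l}) \<le> 2^k * exp (-(real n + 2))"
    and t: "0 < t" "t < 1"
  shows "rearr (avg_op_abs k (faber_level f j)) t / sqrt (2 powr (real k - real j) * ln (1/t) + 1) \<le> 7/2"
proof -
  define b :: real where "b = 2^(j-k)"
  define L where "L = ln (1/t)"
  define e where "e = sqrt (L / b + 1)"
  define c where "c l = 2^k * integral (dyad_int k l) (\<lambda>x. \<bar>faber_level f j x\<bar>)" for l
  define n where "n = nat (ceiling L) - 1"
  have b1: "1 \<le> b" by (simp add: b_def)
  have L0: "0 < L" using t by (simp add: L_def)
  have e1: "1 \<le> e" using L0 b1 by (simp add: e_def)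
  have e2: "e^2 = L / b + 1" using L0 b1 by (simp add: e_def)
  have den: "sqrt (2 powr (real k - real j) * ln (1/t) + 1) = e"
    unfolding den_eq[OF kj] e_def L_def b_def by simp
  have cL: "1 \<le> ceiling L" using L0 by simp
  have nn: "real n + 1 = real_of_int (ceiling L)"
  proof -
    have c1: "1 \<le> nat (ceiling L)" using cL by (metis nat_mono nat_one_as_int)
    have "real n = real (nat (ceiling L)) - 1" unfolding n_def using c1 by (simp add: of_nat_diff)
    also have "real (nat (ceiling L)) = real_of_int (ceiling L)" using cL by simp
    finally show ?thesis by simp
  qed
  have nL: "real n + 1 \<le> L + 1" "L \<le> real n + 1"
    unfolding nn using ceiling_correct[of L] by linarith+
  define thr where "thr = 12 * (real n + 1 + 2^(j-k))"
  have sub: "{l\<in>{..<2^k}. 7/2 * e < \<bar>c l\<bar>} \<subseteq> {l\<in>{..<2^k}. thr < Tp f j k l}"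
  proof safe
    fix l :: nat assume l: "l < 2^k" and ce: "7/2 * e < \<bar>c l\<bar>"
    show "thr < Tp f j k l"
    proof (rule ccontr)
      assume "\<not> thr < Tp f j k l"
      then have T: "Tp f j k l \<le> 12 * (real n + 1 + b)" by (simp add: thr_def b_def)
      have "\<bar>c l\<bar> = c l" unfolding c_def using c_nonneg by simp
      also have "c l \<le> e / 2 + Tp f j k l / (8 * e * b)"
        unfolding c_def b_def using c_block_bound[OF kj l, of e] e1 by simp
      also have "Tp f j k l / (8 * e * b) \<le> 12 * (real n + 1 + b) / (8 * e * b)"
        using T e1 b1 by (intro divide_right_mono) auto
      also have "12 * (real n + 1 + b) \<le> 12 * (2 * e^2 * b)"
      proof -
        have "real n + 1 + b \<le> 2 * (L + b)" using nL L0 b1 by argo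
        moreover have "2 * e^2 * b = 2 * (L + b)" using e2 b1 by (simp add: field_simps)
        ultimately show ?thesis by simp
      qed
      then have "12 * (real n + 1 + b) / (8 * e * b) \<le> 12 * (2 * e^2 * b) / (8 * e * b)"
        using e1 b1 by (intro divide_right_mono) auto
      also have "12 * (2 * e^2 * b) / (8 * e * b) = 3 * e"
        using e1 b1 by (simp add: field_simps power2_eq_square)
      finally show False using ce by simp
    qed
  qed
  have "real (card {l\<in>{..<2^k}. 7/2 * e < \<bar>c l\<bar>}) \<le> real (card {l\<in>{..<2^k}. thr < Tp f j k l})"
    using sub by (intro of_nat_mono card_mono) auto
  also have "\<dots> \<le> 2^k * exp (-(real n + 2))" unfolding thr_def by (rule good)
  also have "\<dots> \<le> 2^k * t"
  proof -
    have "exp (-(real n + 2)) \<le> exp (- L)" using nL by simp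
    also have "exp (- L) = t" using t by (simp add: L_def ln_div)
    finally show ?thesis by simp
  qed
  finally have cnt: "real (card {l\<in>{..<2^k}. 7/2 * e < \<bar>c l\<bar>}) \<le> 2^k * t" .
  have "rearr (avg_op_abs k (faber_level f j)) t \<le> 7/2 * e"
    by (rule rearr_le[OF _ _ cnt]) (use e1 in \<open>simp_all add: avg_op_abs_eq c_def\<close>)
  then show ?thesis unfolding den using e1 by (simp add: field_simps)
qed

lemma bad_bound:
  assumes kj: "k \<le> j" and t: "0 < t" "t < 1"
  shows "rearr (avg_op_abs k (faber_level f j)) t / sqrt (2 powr (real k - real j) * ln (1/t) + 1)
     \<le> (\<Sum>m<2^j. \<bar>faber_coeff j m f\<bar>)"
proof -
  define S where "S = (\<Sum>m<2^j. \<bar>faber_coeff j m f\<bar>)"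
  define c where "c l = 2^k * integral (dyad_int k l) (\<lambda>x. \<bar>faber_level f j x\<bar>)" for l
  define r where "r = rearr (avg_op_abs k (faber_level f j)) t"
  define d where "d = sqrt (2 powr (real k - real j) * ln (1/t) + 1)"
  have S0: "0 \<le> S" unfolding S_def by (auto intro: sum_nonneg)
  have d1: "1 \<le> d" unfolding d_def using t by simp
  have cS: "\<bar>c l\<bar> \<le> S" if "l < 2^k" for l
  proof -
    have "0 \<le> c l" unfolding c_def by (rule c_nonneg)
    moreover have "c l \<le> S" unfolding c_def S_def by (rule c_block_bound2[OF kj that])
    ultimately show ?thesis by simp
  qed
  have "{l\<in>{..<2^k}. S < \<bar>c l\<bar>} = {}"
  proof -
    { fix l assume "l < 2^k" "S < \<bar>c l\<bar>" then have False using cS[of l] by simp }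
    then show ?thesis by auto
  qed
  then have cnt0: "real (card {l\<in>{..<2^k}. S < \<bar>c l\<bar>}) \<le> 2^k * t" using t by (simp only: card.empty) simp
  have "r \<le> S" unfolding r_def
    by (rule rearr_le[OF _ S0 cnt0]) (simp add: avg_op_abs_eq c_def)
  show ?thesis
    unfolding S_def[symmetric] r_def[symmetric] d_def[symmetric]
  proof (cases "r \<le> 0")
    case True
    then have "r / d \<le> 0" using d1 by (simp add: divide_nonpos_pos)
    then show "r / d \<le> S" using S0 by simp
  next
    case False
    then have "r / d \<le> r" using d1 by (intro div_le_self_real) simp_all
    then show "r / d \<le> S" using \<open>r \<le> S\<close> by simp
  qed
qed

lemma gauss_pt:
  fixes s x :: real
  assumes s: "0 < s"
  shows "normal_density 0 s x * exp (x^2 / (4 * s^2)) = sqrt 2 * normal_density 0 (sqrt 2 * s) x"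
proof -
  have e: "exp (- (x^2) / (2 * s^2)) * exp (x^2 / (4 * s^2)) = exp (- (x^2) / (2 * (sqrt 2 * s)^2))"
    unfolding exp_add[symmetric] using s by (simp add: field_simps power2_eq_square)
  have r: "1 / sqrt (2 * pi * s^2) = sqrt 2 * (1 / sqrt (2 * pi * (sqrt 2 * s)^2))"
    using s by (simp add: power_mult_distrib real_sqrt_mult field_simps)
  show ?thesis unfolding normal_density_def using e r by (simp add: mult.assoc)
qed

lemma gauss_nn:
  fixes s :: real
  assumes s: "0 < s"
  shows "(\<integral>\<^sup>+x. ennreal (normal_density 0 s x) * ennreal (exp (x^2 / (4 * s^2))) \<partial>lborel) = ennreal (sqrt 2)"
proof -
  have "(\<integral>\<^sup>+x. ennreal (normal_density 0 s x) * ennreal (exp (x^2 / (4 * s^2))) \<partial>lborel)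
      = (\<integral>\<^sup>+x. ennreal (sqrt 2) * ennreal (normal_density 0 (sqrt 2 * s) x) \<partial>lborel)"
    by (intro nn_integral_cong) (simp add: ennreal_mult[symmetric] gauss_pt[OF s])
  also have "\<dots> = ennreal (sqrt 2) * (\<integral>\<^sup>+x. ennreal (normal_density 0 (sqrt 2 * s) x) \<partial>lborel)"
    by (rule nn_integral_cmult) simp
  also have "(\<integral>\<^sup>+x. ennreal (normal_density 0 (sqrt 2 * s) x) \<partial>lborel) = 1"
    using s by (subst nn_integral_eq_integral) auto
  finally show ?thesis by simp
qed

definition Zr :: "(real \<Rightarrow> 'a \<Rightarrow> real) \<Rightarrow> nat \<Rightarrow> nat \<Rightarrow> 'a \<Rightarrow> real" where
  "Zr W j i \<omega> = Zp (\<lambda>t. W t \<omega>) j i"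

definition Tr :: "(real \<Rightarrow> 'a \<Rightarrow> real) \<Rightarrow> nat \<Rightarrow> nat \<Rightarrow> nat \<Rightarrow> 'a \<Rightarrow> real" where
  "Tr W j k l \<omega> = Tp (\<lambda>t. W t \<omega>) j k l"

lemma Zr_eq: "Zr W j i \<omega> = 2^(j+1) * (W (real (Suc i) / 2^(j+1)) \<omega> - W (real i / 2^(j+1)) \<omega>)^2"
  by (simp add: Zr_def Zp_def)

lemma Tr_eq: "Tr W j k l \<omega> = (\<Sum>i\<in>{2*(l*2^(j-k))..<2*((l+1)*2^(j-k))}. Zr W j i \<omega>)"
  by (simp add: Tr_def Tp_def Zr_def)

context prob_space
begin

lemma W_meas:
  assumes "wiener_process M W" shows "(\<lambda>\<omega>. W (real i / 2^j) \<omega>) \<in> borel_measurable M"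
  using assms unfolding wiener_process_def by auto

lemma Zr_meas:
  assumes "wiener_process M W" shows "Zr W j i \<in> borel_measurable M"
proof -
  note [measurable] = W_meas[OF assms, of "Suc i" "j+1"] W_meas[OF assms, of i "j+1"]
  show ?thesis unfolding Zr_eq[abs_def] by measurable
qed

lemma Tr_meas:
  assumes "wiener_process M W" shows "Tr W j k l \<in> borel_measurable M"
  unfolding Tr_eq[abs_def] using Zr_meas[OF assms] by measurable

lemma Zr_exp:
  assumes W: "wiener_process M W"
  shows "(\<integral>\<^sup>+\<omega>. ennreal (exp (Zr W j i \<omega> / 4)) \<partial>M) = ennreal (sqrt 2)"
proof -
  define s where "s = real i / 2^(j+1)"
  define t where "t = real (Suc i) / 2^(j+1)"
  define sg where "sg = sqrt (t - s)"
  have st: "0 \<le> s" "s < t" by (auto simp: s_def t_def divide_strict_right_mono)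
  have tms: "t - s = 1 / 2^(j+1)" by (simp add: s_def t_def diff_divide_distrib[symmetric])
  have sg0: "0 < sg" using st by (simp add: sg_def)
  have sg2: "sg^2 = 1 / 2^(j+1)" using st tms by (simp add: sg_def)
  have D: "distributed M lborel (\<lambda>\<omega>. W t \<omega> - W s \<omega>) (\<lambda>x. ennreal (normal_density 0 sg x))"
    using W st unfolding wiener_process_def sg_def by blast
  have "(\<integral>\<^sup>+x. ennreal (normal_density 0 sg x) * ennreal (exp (x^2 / (4 * sg^2))) \<partial>lborel)
      = (\<integral>\<^sup>+\<omega>. ennreal (exp ((W t \<omega> - W s \<omega>)^2 / (4 * sg^2))) \<partial>M)"
    by (rule distributed_nn_integral[OF D]) simp
  also have "\<dots> = (\<integral>\<^sup>+\<omega>. ennreal (exp (Zr W j i \<omega> / 4)) \<partial>M)"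
    by (intro nn_integral_cong) (simp add: Zr_eq sg2 s_def t_def field_simps)
  finally show ?thesis using gauss_nn[OF sg0] by simp
qed

lemma Zr_indep:
  assumes W: "wiener_process M W"
  shows "indep_vars (\<lambda>_. borel) (Zr W j) {..<2^(j+1)}"
proof -
  define ts :: "nat \<Rightarrow> real" where "ts i = real i / 2^(j+1)" for i
  have "0 \<le> ts 0 \<and> (\<forall>i<2^(j+1). ts i < ts (Suc i))"
    by (auto simp: ts_def divide_strict_right_mono)
  then have I: "indep_vars (\<lambda>_. borel) (\<lambda>i \<omega>. W (ts (Suc i)) \<omega> - W (ts i) \<omega>) {..<2^(j+1)}"
    using W unfolding wiener_process_def by blast
  have "indep_vars (\<lambda>_. borel) (\<lambda>i \<omega>. (\<lambda>x. 2^(j+1) * x^2) (W (ts (Suc i)) \<omega> - W (ts i) \<omega>)) {..<2^(j+1)}"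
    by (rule indep_vars_compose2[OF I]) simp
  moreover have "(\<lambda>i \<omega>. (\<lambda>x. 2^(j+1) * x^2) (W (ts (Suc i)) \<omega> - W (ts i) \<omega>)) = Zr W j"
    by (simp add: fun_eq_iff Zr_eq ts_def)
  ultimately show ?thesis by simp
qed

lemma block_exp:
  assumes W: "wiener_process M W" and B: "B \<subseteq> {..<2^(j+1)}"
  shows "(\<integral>\<^sup>+\<omega>. ennreal (exp ((\<Sum>i\<in>B. Zr W j i \<omega>) / 4)) \<partial>M) = ennreal (sqrt 2) ^ card B"
proof -
  have finB: "finite B" using B finite_subset by blast
  have I: "indep_vars (\<lambda>_. borel) (\<lambda>i \<omega>. ennreal (exp (Zr W j i \<omega> / 4))) B"
    by (rule indep_vars_compose2[OF indep_vars_subset[OF Zr_indep[OF W] B]]) simp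
  have "(\<integral>\<^sup>+\<omega>. ennreal (exp ((\<Sum>i\<in>B. Zr W j i \<omega>) / 4)) \<partial>M)
      = (\<integral>\<^sup>+\<omega>. (\<Prod>i\<in>B. ennreal (exp (Zr W j i \<omega> / 4))) \<partial>M)"
    by (intro nn_integral_cong) (simp add: exp_sum sum_divide_distrib finB prod_ennreal)
  also have "\<dots> = (\<Prod>i\<in>B. \<integral>\<^sup>+\<omega>. ennreal (exp (Zr W j i \<omega> / 4)) \<partial>M)"
    by (rule indep_vars_nn_integral[OF finB I]) simp
  also have "\<dots> = (\<Prod>i\<in>B. ennreal (sqrt 2))" by (intro prod.cong refl Zr_exp[OF W])
  finally show ?thesis by simp
qed

lemma block_tail:
  assumes W: "wiener_process M W" and kj: "k \<le> j" and l: "l < 2^k"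
  shows "prob {\<omega>\<in>space M. c < Tr W j k l \<omega>} \<le> 2^(2^(j-k)) * exp (- c / 4)"
proof -
  define B where "B = {2*(l*2^(j-k))..<2*((l+1)*2^(j-k))}"
  have BB: "B \<subseteq> {..<2^(j+1)}"
  proof -
    have "2*((l+1)*2^(j-k)) \<le> 2 * (2::nat)^j" using nat_block_le[OF kj l] by simp
    then show ?thesis by (auto simp: B_def)
  qed
  have cB: "card B = 2 * 2^(j-k)" by (simp add: B_def algebra_simps)
  have T: "Tr W j k l \<omega> = (\<Sum>i\<in>B. Zr W j i \<omega>)" for \<omega> by (simp add: Tr_eq B_def)
  note [measurable] = Tr_meas[OF W]
  define u where "u \<omega> = ennreal (exp (Tr W j k l \<omega> / 4))" for \<omega>
  have uI: "(\<integral>\<^sup>+\<omega>. u \<omega> \<partial>M) = ennreal (2^(2^(j-k)))"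
  proof -
    have "(\<integral>\<^sup>+\<omega>. u \<omega> \<partial>M) = ennreal (sqrt 2) ^ (2 * 2^(j-k))"
      unfolding u_def T using block_exp[OF W BB] cB by simp
    also have "\<dots> = ennreal ((sqrt 2) ^ (2 * 2^(j-k)))" by (simp add: ennreal_power)
    also have "(sqrt 2) ^ (2 * 2^(j-k)) = (2::real) ^ (2^(j-k))" by (simp add: power_mult)
    finally show ?thesis .
  qed
  have "emeasure M {\<omega>\<in>space M. 1 \<le> ennreal (exp (- c / 4)) * u \<omega>}
      \<le> ennreal (exp (- c / 4)) * (\<integral>\<^sup>+\<omega>. u \<omega> * indicator (space M) \<omega> \<partial>M)"
    by (rule nn_integral_Markov_inequality) (auto simp: u_def)
  also have "(\<integral>\<^sup>+\<omega>. u \<omega> * indicator (space M) \<omega> \<partial>M) = (\<integral>\<^sup>+\<omega>. u \<omega> \<partial>M)"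
    by (intro nn_integral_cong) simp
  finally have mk: "emeasure M {\<omega>\<in>space M. 1 \<le> ennreal (exp (- c / 4)) * u \<omega>}
      \<le> ennreal (exp (- c / 4) * 2^(2^(j-k)))"
    unfolding uI by (simp add: ennreal_mult)
  have sub: "{\<omega>\<in>space M. c < Tr W j k l \<omega>} \<subseteq> {\<omega>\<in>space M. 1 \<le> ennreal (exp (- c / 4)) * u \<omega>}"
  proof safe
    fix \<omega> assume "\<omega> \<in> space M" "c < Tr W j k l \<omega>"
    then have "1 \<le> exp (- c / 4) * exp (Tr W j k l \<omega> / 4)"
      by (simp add: exp_add[symmetric])
    then show "1 \<le> ennreal (exp (- c / 4)) * u \<omega>"
      unfolding u_def by (simp add: ennreal_mult[symmetric])
  qed
  have ms: "{\<omega>\<in>space M. 1 \<le> ennreal (exp (- c / 4)) * u \<omega>} \<in> sets M"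
    unfolding u_def by measurable
  have "emeasure M {\<omega>\<in>space M. c < Tr W j k l \<omega>} \<le> ennreal (exp (- c / 4) * 2^(2^(j-k)))"
    using emeasure_mono[OF sub ms] mk by (rule order_trans)
  then show ?thesis by (simp add: emeasure_eq_measure mult.commute)
qed

lemma Tr_indep:
  assumes W: "wiener_process M W" and kj: "k \<le> j"
  shows "indep_vars (\<lambda>_. borel) (\<lambda>l. Tr W j k l) {..<2^k}"
proof -
  define K where "K l = {2*(l*2^(j-k))..<2*((l+1)*2^(j-k))}" for l :: nat
  have KI: "K l \<subseteq> {..<2^(j+1)}" if "l \<in> {..<2^k}" for l :: nat
  proof -
    have "(l+1)*2^(j-k) \<le> (2::nat)^j" using nat_block_le[OF kj, of l] that by simp
    then have "2*((l+1)*2^(j-k)) \<le> 2 * (2::nat)^j" by simp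
    then show ?thesis by (auto simp: K_def)
  qed
  have disj: "disjoint_family_on K {..<2^k}"
  proof (unfold disjoint_family_on_def, intro ballI impI)
    fix a b :: nat assume "a \<in> {..<2^k}" "b \<in> {..<2^k}" "a \<noteq> b"
    show "K a \<inter> K b = {}"
    proof (cases "a < b")
      case True
      then have "(a+1)*2^(j-k) \<le> b*(2::nat)^(j-k)" by (intro mult_le_mono1) simp
      then show ?thesis by (auto simp: K_def)
    next
      case False
      then have "b < a" using \<open>a \<noteq> b\<close> by simp
      then have "(b+1)*2^(j-k) \<le> a*(2::nat)^(j-k)" by (intro mult_le_mono1) simp
      then show ?thesis by (auto simp: K_def)
    qed
  qed
  have R: "indep_vars (\<lambda>l. PiM (K l) (\<lambda>_. borel)) (\<lambda>l \<omega>. restrict (\<lambda>i. Zr W j i \<omega>) (K l)) {..<2^k}"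
    by (rule indep_vars_restrict[OF Zr_indep[OF W] KI disj])
  have C: "indep_vars (\<lambda>_. borel) (\<lambda>l \<omega>. (\<lambda>g. \<Sum>i\<in>K l. g i) (restrict (\<lambda>i. Zr W j i \<omega>) (K l))) {..<2^k}"
    by (rule indep_vars_compose2[OF R]) (intro borel_measurable_sum measurable_component_singleton)
  show ?thesis
    by (rule indep_vars_cong[THEN iffD1, OF refl _ refl C]) (simp add: fun_eq_iff Tr_eq K_def)
qed

lemma cheb:
  fixes E :: "nat \<Rightarrow> 'a set" and L :: "nat set"
  assumes L: "finite L" and E: "\<And>l. l \<in> L \<Longrightarrow> E l \<in> events"
    and pair: "\<And>l l'. l \<in> L \<Longrightarrow> l' \<in> L \<Longrightarrow> l \<noteq> l' \<Longrightarrow> prob (E l \<inter> E l') = prob (E l) * prob (E l')"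
    and N: "0 < N" and mu: "2 * (\<Sum>l\<in>L. prob (E l)) \<le> N"
  shows "prob {\<omega>\<in>space M. N < (\<Sum>l\<in>L. indicator (E l) \<omega>)} \<le> 4 * (\<Sum>l\<in>L. prob (E l)) / N^2"
proof -
  define p where "p l = prob (E l)" for l
  define \<mu> where "\<mu> = (\<Sum>l\<in>L. p l)"
  define g where "g l l' \<omega> = (indicator (E l) \<omega> - p l) * (indicator (E l') \<omega> - p l')" for l l' and \<omega> :: 'a
  define Y where "Y \<omega> = (\<Sum>l\<in>L. (indicator (E l) \<omega> - p l))" for \<omega> :: 'a
  have g_eq: "g l l' \<omega> = indicator (E l \<inter> E l') \<omega> - p l' * indicator (E l) \<omega> - p l * indicator (E l') \<omega> + p l * p l'" for l l' \<omega>
    unfolding g_def indicator_inter_arith by (simp add: algebra_simps)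
  have gi: "integrable M (g l l')" if "l \<in> L" "l' \<in> L" for l l'
  proof -
    have ii: "integrable M (indicator A :: 'a \<Rightarrow> real)" if "A \<in> events" for A
      using that by (intro integrable_real_indicator) (auto simp: emeasure_eq_measure)
    have "E l \<inter> E l' \<in> events" using E that by auto
    then show ?thesis unfolding g_eq[abs_def] using ii[of "E l"] ii[of "E l'"] ii[of "E l \<inter> E l'"] E that
      by simp
  qed
  have gI: "integral\<^sup>L M (g l l') \<le> (if l = l' then p l else 0)" if "l \<in> L" "l' \<in> L" for l l'
  proof -
    have "integral\<^sup>L M (g l l') = prob (E l \<inter> E l') - p l' * p l - p l * p l' + p l * p l'"
    proof -
      have ii: "integrable M (indicator A :: 'a \<Rightarrow> real)" if "A \<in> events" for A
        using that by (intro integrable_real_indicator) (auto simp: emeasure_eq_measure)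
      have EE: "E l \<inter> E l' \<in> events" using E that by auto
      show ?thesis using ii[OF EE] ii[OF E[OF that(1)]] ii[OF E[OF that(2)]] EE E[OF that(1)] E[OF that(2)]
        by (simp add: sets.Int_space_eq2 p_def g_eq[abs_def] prob_space)
    qed
    also have "\<dots> \<le> (if l = l' then p l else 0)"
    proof (cases "l = l'")
      case True
      have "0 \<le> p l * p l" by (simp add: p_def)
      then show ?thesis using True by (simp add: p_def)
    next
      case False
      then show ?thesis using pair[OF that False] by (simp add: p_def)
    qed
    finally show ?thesis .
  qed
  have Ysq: "(Y \<omega>)^2 = (\<Sum>l\<in>L. \<Sum>l'\<in>L. g l l' \<omega>)" for \<omega>
    unfolding Y_def g_def power2_eq_square sum_product ..
  have Yi: "integrable M (\<lambda>\<omega>. (Y \<omega>)^2)"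
    unfolding Ysq using gi by (intro Bochner_Integration.integrable_sum) auto
  have YI: "integral\<^sup>L M (\<lambda>\<omega>. (Y \<omega>)^2) \<le> \<mu>"
  proof -
    have "integral\<^sup>L M (\<lambda>\<omega>. (Y \<omega>)^2) = (\<Sum>l\<in>L. \<Sum>l'\<in>L. integral\<^sup>L M (g l l'))"
      unfolding Ysq using gi by (simp add: Bochner_Integration.integrable_sum)
    also have "\<dots> \<le> (\<Sum>l\<in>L. \<Sum>l'\<in>L. (if l = l' then p l else 0))"
      using gI by (intro sum_mono) auto
    also have "\<dots> = \<mu>" unfolding \<mu>_def using L by simp
    finally show ?thesis .
  qed
  have sub: "{\<omega>\<in>space M. N < (\<Sum>l\<in>L. indicator (E l) \<omega>)} \<subseteq> {\<omega>\<in>space M. (N/2)^2 \<le> (Y \<omega>)^2}"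
  proof safe
    fix \<omega> assume "\<omega> \<in> space M" and c: "N < (\<Sum>l\<in>L. indicator (E l) \<omega>)"
    have "Y \<omega> = (\<Sum>l\<in>L. indicator (E l) \<omega>) - \<mu>" unfolding Y_def \<mu>_def by (simp add: sum_subtractf)
    then have "N / 2 \<le> Y \<omega>" using c mu unfolding \<mu>_def p_def by simp
    moreover have "0 \<le> N / 2" using N by simp
    ultimately show "(N/2)^2 \<le> (Y \<omega>)^2" by (rule power_mono)
  qed
  have Ym: "{\<omega>\<in>space M. (N/2)^2 \<le> (Y \<omega>)^2} \<in> events"
    using Yi by measurable
  have "prob {\<omega>\<in>space M. N < (\<Sum>l\<in>L. indicator (E l) \<omega>)} \<le> prob {\<omega>\<in>space M. (N/2)^2 \<le> (Y \<omega>)^2}"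
    by (rule finite_measure_mono[OF sub Ym])
  also have "\<dots> \<le> integral\<^sup>L M (\<lambda>\<omega>. (Y \<omega>)^2) / (N/2)^2"
    by (rule integral_Markov_inequality_measure[OF Yi, of "space M"]) (use N in auto)
  also have "\<dots> \<le> \<mu> / (N/2)^2" using YI by (simp add: divide_right_mono)
  also have "\<dots> = 4 * (\<Sum>l\<in>L. prob (E l)) / N^2" by (simp add: \<mu>_def p_def power2_eq_square)
  finally show ?thesis .
qed

end

lemma two_le_exp1: "(2::real) \<le> exp 1"
  using exp_ge_add_one_self[of 1] by simp

lemma pow2_le_exp: "(2::real)^B \<le> exp (real B)"
proof -
  have "(2::real)^B \<le> (exp 1)^B" by (rule power_mono[OF two_le_exp1]) simp
  also have "\<dots> = exp (real B)" using exp_of_nat_mult[of B "1::real"] by simp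
  finally show ?thesis .
qed

lemma exp_neg_half: "exp (- real n) \<le> (1/2::real)^n"
proof -
  have "exp (-1) \<le> (1/2::real)" using two_le_exp1 by (simp add: exp_minus field_simps)
  then have "(exp (-1))^n \<le> (1/2::real)^n" by (rule power_mono) simp
  moreover have "(exp (-1))^n = exp (- real n)" using exp_of_nat_mult[of n "-1::real"] by simp
  ultimately show ?thesis by simp
qed

lemma exp_neg_quarter: "exp (- 2 * real B) \<le> (1/4::real)^B"
proof -
  have "4 \<le> exp (1::real) * exp 1" using two_le_exp1 mult_mono[OF two_le_exp1 two_le_exp1] by simp
  then have "exp (-2) \<le> (1/4::real)" by (simp add: exp_minus field_simps exp_add[symmetric])
  then have "(exp (-2))^B \<le> (1/4::real)^B" by (rule power_mono) simp
  moreover have "(exp (-2))^B = exp (- 2 * real B)" using exp_of_nat_mult[of B "-2::real"] by (simp add: mult.commute)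
  ultimately show ?thesis by simp
qed

lemma quarter_pow: "(1/4::real)^(2^d) \<le> (1/4)^d"
  by (rule power_decreasing) (auto intro: less_imp_le less_exp)

definition badset :: "'a measure \<Rightarrow> (real \<Rightarrow> 'a \<Rightarrow> real) \<Rightarrow> nat \<Rightarrow> nat \<Rightarrow> nat \<Rightarrow> 'a set" where
  "badset M W j k n = {\<omega>\<in>space M. 2^k * exp (-(real n + 2)) <
     (\<Sum>l<2^k. indicator {\<omega>\<in>space M. 12 * (real n + 1 + 2^(j-k)) < Tr W j k l \<omega>} \<omega>)}"

context prob_space
begin

lemma badset_meas:
  assumes W: "wiener_process M W"
  shows "badset M W j k n \<in> events"
proof -
  note [measurable] = Tr_meas[OF W]
  show ?thesis unfolding badset_def by measurable
qed

lemma bad_prob: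
  assumes W: "wiener_process M W" and kj: "k \<le> j"
  shows "prob (badset M W j k n) \<le> 4 * exp 1 * (1/2)^n * (1/2)^j * (1/2)^(j-k)"
proof -
  define c where "c = 12 * (real n + 1 + 2^(j-k))"
  define E where "E l = {\<omega>\<in>space M. c < Tr W j k l \<omega>}" for l
  define B :: nat where "B = 2^(j-k)"
  define P :: real where "P = 2^B * exp (- c / 4)"
  define N :: real where "N = 2^k * exp (-(real n + 2))"
  note [measurable] = Tr_meas[OF W]
  have Em: "E l \<in> events" for l unfolding E_def by measurable
  have pE: "prob (E l) \<le> P" if "l < 2^k" for l
    unfolding E_def P_def B_def by (rule block_tail[OF W kj that])
  have Eeq: "Tr W j k i -` {c<..} \<inter> space M = E i" for i by (auto simp: E_def)
  have pair: "prob (E l \<inter> E l') = prob (E l) * prob (E l')"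
    if "l \<in> {..<2^k}" "l' \<in> {..<2^k}" "l \<noteq> l'" for l l'
  proof -
    have "prob (\<Inter>i\<in>{l,l'}. Tr W j k i -` {c<..} \<inter> space M) = (\<Prod>i\<in>{l,l'}. prob (Tr W j k i -` {c<..} \<inter> space M))"
      by (rule indep_varsD[OF Tr_indep[OF W kj]]) (use that in auto)
    then show ?thesis unfolding Eeq using that by simp
  qed
  have mu: "(\<Sum>l<2^k. prob (E l)) \<le> 2^k * P"
  proof -
    have "(\<Sum>l<2^k. prob (E l)) \<le> (\<Sum>l<(2::nat)^k. P)" by (intro sum_mono pE) simp
    then show ?thesis by simp
  qed
  have c4: "c / 4 = 3 * (real n + 1 + real B)" by (simp add: c_def B_def)
  have N0: "0 < N" by (simp add: N_def)
  have PN: "2 * P \<le> exp (-(real n + 2))"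
  proof -
    have "2 * P = 2 * 2^B * exp (- c / 4)" by (simp add: P_def)
    also have "\<dots> \<le> exp 1 * exp (real B) * exp (- c / 4)"
      by (intro mult_right_mono mult_mono two_le_exp1 pow2_le_exp) auto
    also have "\<dots> = exp (1 + real B - c / 4)" by (simp add: exp_add[symmetric] exp_diff)
    also have "\<dots> \<le> exp (-(real n + 2))" unfolding c4 by simp
    finally show ?thesis .
  qed
  have mu2: "2 * (\<Sum>l<2^k. prob (E l)) \<le> N"
  proof -
    have "2 * (\<Sum>l<2^k. prob (E l)) \<le> 2^k * (2 * P)" using mu by simp
    also have "\<dots> \<le> N" unfolding N_def using PN by simp
    finally show ?thesis .
  qed
  have "prob {\<omega>\<in>space M. N < (\<Sum>l\<in>{..<2^k}. indicator (E l) \<omega>)} \<le> 4 * (\<Sum>l\<in>{..<2^k}. prob (E l)) / N^2"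
    by (rule cheb[OF _ Em pair N0 mu2]) auto
  moreover have "badset M W j k n = {\<omega>\<in>space M. N < (\<Sum>l\<in>{..<2^k}. indicator (E l) \<omega>)}"
    unfolding badset_def N_def E_def c_def ..
  ultimately have "prob (badset M W j k n) \<le> 4 * (\<Sum>l\<in>{..<2^k}. prob (E l)) / N^2" by simp
  also have "\<dots> \<le> 4 * (2^k * P) / N^2" using mu by (intro divide_right_mono) auto
  also have "4 * (2^k * P) / N^2 = 4 * (P * exp (2 * (real n + 2))) / 2^k"
  proof -
    have inv: "1 / (exp (-(real n + 2)))^2 = exp (2 * (real n + 2))"
    proof -
      have e1: "(exp (-(real n + 2)))^2 = exp (-(2 * (real n + 2)))"
        by (simp add: power2_eq_square exp_add[symmetric])
      have e2: "1 / exp (-(2 * (real n + 2))) = exp (2 * (real n + 2))"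
        by (simp only: exp_minus divide_inverse inverse_inverse_eq mult_1)
      show ?thesis by (simp only: e1 e2)
    qed
    have "4 * (2^k * P) / N^2 = 4 * P / 2^k * (1 / (exp (-(real n + 2)))^2)"
      unfolding N_def by (simp add: power_mult_distrib power2_eq_square)
    then show ?thesis unfolding inv by simp
  qed
  also have "P * exp (2 * (real n + 2)) \<le> exp 1 * (1/2)^n * (1/4)^(j-k)"
  proof -
    have "P * exp (2 * (real n + 2)) = 2^B * exp (1 - real n - 3 * real B)"
    proof -
      have mc: "- c / 4 = - (3 * (real n + 1 + real B))" using c4 by simp
      have "exp (- c / 4) * exp (2 * (real n + 2)) = exp (1 - real n - 3 * real B)"
        unfolding mc exp_add[symmetric] by (simp add: algebra_simps)
      then show ?thesis unfolding P_def by (simp add: mult.assoc)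
    qed
    also have "\<dots> \<le> exp (real B) * exp (1 - real n - 3 * real B)"
      by (intro mult_right_mono pow2_le_exp) simp
    also have "\<dots> = exp 1 * exp (- real n) * exp (- 2 * real B)"
      by (simp add: exp_add[symmetric] algebra_simps)
    also have "\<dots> \<le> exp 1 * (1/2)^n * (1/4)^B"
      by (intro mult_mono exp_neg_half exp_neg_quarter) auto
    also have "(1/4::real)^B \<le> (1/4)^(j-k)" unfolding B_def by (rule quarter_pow)
    then have "exp 1 * (1/2)^n * (1/4::real)^B \<le> exp 1 * (1/2)^n * (1/4)^(j-k)"
      by (intro mult_left_mono) auto
    finally show ?thesis .
  qed
  then have "4 * (P * exp (2 * (real n + 2))) / 2^k \<le> 4 * (exp 1 * (1/2)^n * (1/4)^(j-k)) / 2^k"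
    by (intro divide_right_mono) auto
  also have "4 * (exp 1 * (1/2)^n * (1/4)^(j-k)) / 2^k = 4 * exp 1 * (1/2)^n * (1/2)^j * (1/2::real)^(j-k)"
  proof -
    have q: "(1/4::real)^(j-k) / 2^k = (1/2)^j * (1/2)^(j-k)"
      using pow2_split[OF kj] by (simp add: power_divide field_simps power_mult_distrib[symmetric])
    have "4 * (exp 1 * (1/2)^n * (1/4)^(j-k)) / 2^k = 4 * exp 1 * (1/2)^n * ((1/4::real)^(j-k) / 2^k)"
      by (simp only: times_divide_eq_right mult.assoc)
    then show ?thesis unfolding q by (simp only: mult.assoc)
  qed
  finally show ?thesis .
qed

end

lemma geom_half_sum: "(\<Sum>k\<in>{..j}. (1/2::real)^(j-k)) \<le> 2"
proof -
  have "(\<Sum>k\<in>{..j}. (1/2::real)^(j-k)) = (\<Sum>k<Suc j. (1/2::real)^(Suc j - Suc k))"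
    by (simp add: lessThan_Suc_atMost)
  also have "\<dots> = (\<Sum>k<Suc j. (1/2::real)^k)"
    by (rule sum.nat_diff_reindex)
  also have "\<dots> \<le> (\<Sum>k. (1/2::real)^k)"
    by (intro sum_le_suminf summable_geometric) auto
  also have "\<dots> = 2" using suminf_geometric[of "1/2::real"] by simp
  finally show ?thesis .
qed

definition badj :: "'a measure \<Rightarrow> (real \<Rightarrow> 'a \<Rightarrow> real) \<Rightarrow> nat \<Rightarrow> 'a set" where
  "badj M W j = (\<Union>k\<in>{..j}. \<Union>n. badset M W j k n)"

context prob_space
begin

lemma badj_meas:
  assumes W: "wiener_process M W" shows "badj M W j \<in> events"
  unfolding badj_def using badset_meas[OF W] by auto

lemma badk_prob:
  assumes W: "wiener_process M W" and kj: "k \<le> j"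
  shows "prob (\<Union>n. badset M W j k n) \<le> 8 * exp 1 * (1/2)^j * (1/2)^(j-k)"
proof -
  define C :: real where "C = 4 * exp 1 * (1/2)^j * (1/2)^(j-k)"
  have b: "prob (badset M W j k n) \<le> C * (1/2)^n" for n
    using bad_prob[OF W kj, of n] by (simp add: C_def mult.commute mult.left_commute)
  have sg: "summable (\<lambda>n. C * (1/2::real)^n)"
    by (intro summable_mult summable_geometric) simp
  have sp: "summable (\<lambda>n. prob (badset M W j k n))"
    by (rule summable_comparison_test'[OF sg]) (use b in simp)
  have "prob (\<Union>n. badset M W j k n) \<le> (\<Sum>n. prob (badset M W j k n))"
    by (rule finite_measure_subadditive_countably[OF _ sp]) (use badset_meas[OF W] in auto)
  also have "\<dots> \<le> (\<Sum>n. C * (1/2::real)^n)"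
    by (rule suminf_le[OF b sp sg])
  also have "\<dots> = C * 2"
    using suminf_geometric[of "1/2::real"] by (simp add: suminf_mult)
  finally show ?thesis by (simp add: C_def)
qed

lemma badj_prob:
  assumes W: "wiener_process M W"
  shows "prob (badj M W j) \<le> 16 * exp 1 * (1/2)^j"
proof -
  have "prob (badj M W j) \<le> (\<Sum>k\<in>{..j}. prob (\<Union>n. badset M W j k n))"
    unfolding badj_def by (rule measure_UNION_le) (use badset_meas[OF W] in auto)
  also have "\<dots> \<le> (\<Sum>k\<in>{..j}. 8 * exp 1 * (1/2)^j * (1/2)^(j-k))"
    by (intro sum_mono badk_prob[OF W]) simp
  also have "\<dots> = 8 * exp 1 * (1/2)^j * (\<Sum>k\<in>{..j}. (1/2::real)^(j-k))"
    by (simp add: sum_distrib_left)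
  also have "\<dots> \<le> 8 * exp 1 * (1/2)^j * 2"
    by (intro mult_left_mono geom_half_sum) simp
  finally show ?thesis by simp
qed

lemma AE_good:
  assumes W: "wiener_process M W"
  shows "AE \<omega> in M. eventually (\<lambda>j. \<omega> \<in> space M - badj M W j) sequentially"
proof (rule borel_cantelli_AE1)
  show "badj M W j \<in> sets M" for j by (rule badj_meas[OF W])
  show "emeasure M (badj M W j) < \<infinity>" for j by (simp add: emeasure_eq_measure)
  have sg: "summable (\<lambda>j. 16 * exp 1 * (1/2::real)^j)"
    by (intro summable_mult summable_geometric) simp
  show "summable (\<lambda>j. measure M (badj M W j))"
    by (rule summable_comparison_test'[OF sg]) (use badj_prob[OF W] in simp)
qed

end

lemma card_indicator:
  assumes "\<omega> \<in> space M"
  shows "(\<Sum>l<(N::nat). indicator {\<omega>\<in>space M. P l \<omega>} \<omega>) = real (card {l\<in>{..<N}. P l \<omega>})"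
proof -
  have "(\<Sum>l<N. indicator {\<omega>\<in>space M. P l \<omega>} \<omega>) = (\<Sum>l<N. if P l \<omega> then 1 else (0::real))"
    using assms by (intro sum.cong refl) (simp add: indicator_def)
  also have "\<dots> = (\<Sum>l\<in>{l\<in>{..<N}. P l \<omega>}. 1)"
    by (rule sum.inter_filter[symmetric]) simp
  also have "\<dots> = real (card {l\<in>{..<N}. P l \<omega>})" by simp
  finally show ?thesis .
qed

theorem theorem2p10:
  fixes M :: "'a measure" and W :: "real \<Rightarrow> 'a \<Rightarrow> real"
  assumes "wiener_process M W"
  shows "AE \<omega> in M. tA_norm (\<lambda>t. W t \<omega>) < \<infinity>"
proof -
  interpret prob_space M using assms by (simp add: wiener_process_def)
  have fin: "tA_norm (\<lambda>t. W t \<omega>) < \<infinity>"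
    if om: "\<omega> \<in> space M" and ev: "eventually (\<lambda>j. \<omega> \<in> space M - badj M W j) sequentially" for \<omega>
  proof -
    define f where "f = (\<lambda>t. W t \<omega>)"
    obtain J where J: "\<And>j. j \<ge> J \<Longrightarrow> \<omega> \<in> space M - badj M W j"
      using ev unfolding eventually_sequentially by blast
    define S where "S j = (\<Sum>m<2^j. \<bar>faber_coeff j m f\<bar>)" for j
    define Bd where "Bd = 7/2 + (\<Sum>j<J. S j)"
    have S0: "0 \<le> S j" for j unfolding S_def by (auto intro: sum_nonneg)
    have ratio: "rearr (avg_op_abs k (faber_level f j)) t / sqrt (2 powr (real k - real j) * ln (1/t) + 1) \<le> Bd"
      if kj: "k \<le> j" and t: "0 < t" "t < 1" for j k t
    proof (cases "j < J")
      case True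
      have "rearr (avg_op_abs k (faber_level f j)) t / sqrt (2 powr (real k - real j) * ln (1/t) + 1) \<le> S j"
        unfolding S_def by (rule bad_bound[OF kj t])
      also have "S j \<le> (\<Sum>j<J. S j)" using True S0 by (intro member_le_sum) auto
      finally show ?thesis unfolding Bd_def by simp
    next
      case False
      then have nb: "\<omega> \<notin> badset M W j k n" for n using J[of j] kj unfolding badj_def by auto
      have good: "real (card {l\<in>{..<2^k}. 12 * (real n + 1 + 2^(j-k)) < Tp f j k l}) \<le> 2^k * exp (-(real n + 2))" for n
      proof -
        have "\<not> 2^k * exp (-(real n + 2)) <
            (\<Sum>l<2^k. indicator {\<omega>\<in>space M. 12 * (real n + 1 + 2^(j-k)) < Tr W j k l \<omega>} \<omega>)"
          using nb[of n] om unfolding badset_def by auto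
        moreover have "(\<Sum>l<2^k. indicator {\<omega>\<in>space M. 12 * (real n + 1 + 2^(j-k)) < Tr W j k l \<omega>} \<omega>)
           = real (card {l\<in>{..<2^k}. 12 * (real n + 1 + 2^(j-k)) < Tp f j k l})"
          using card_indicator[OF om] by (simp add: Tr_def f_def)
        ultimately show ?thesis by simp
      qed
      have "rearr (avg_op_abs k (faber_level f j)) t / sqrt (2 powr (real k - real j) * ln (1/t) + 1) \<le> 7/2"
        by (rule good_bound[OF kj good t])
      also have "7/2 \<le> Bd" unfolding Bd_def using S0 by (simp add: sum_nonneg)
      finally show ?thesis .
    qed
    have "tA_norm f \<le> ereal Bd"
      unfolding tA_norm_def
      by (intro SUP_least) (use ratio in auto)
    then have "tA_norm f < \<infinity>" by (rule le_less_trans) simp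
    then show ?thesis by (simp add: f_def)
  qed
  show ?thesis
    using AE_good[OF assms] AE_space by eventually_elim (use fin in auto)
qed

end
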